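(* For fixed positive integers $m$ and $s$ there exist positive constants $c=c(m,s)$ and $C=C(m,s)$, independent of $n$, such that for all sufficiently large $n$, $$c\,n\le r_{\Delta}(K_{m,n};s)\le br_{\Delta}(K_{m,n};s)\le C\,n.$$
   Context: For graphs $H$ and $G$ and a positive integer $s$, write $H\xrightarrow{s} G$ if every coloring of the edges of $H$ with $s$ colors contains a monochromatic subgraph isomorphic to $G$. The degree Ramsey number is $r_{\Delta}(G;s)=\min\{\Delta(H): H\xrightarrow{s} G\}$ and the degree bipartite Ramsey number is $br_{\Delta}(G;s)=\min\{\Delta(H): H \text{ is bipartite and } H\xrightarrow{s} G\}$, where $\Delta(H)$ denotes the maximum degree of $H$. $K_{m,n}$ is the complete bipartite graph with parts of sizes $m$ and $n$. *)

theory Defs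
  imports Complex_Main
begin

text \<open>A finite simple graph is represented by its finite set of edges, each edge a
2-element set of vertices. Isolated vertices play no role for degree Ramsey numbers.\<close>

definition graph :: "'a set set \<Rightarrow> bool" where
  "graph E \<longleftrightarrow> finite E \<and> (\<forall>e\<in>E. card e = 2)"

definition verts :: "'a set set \<Rightarrow> 'a set" where
  "verts E = \<Union>E"

definition degree :: "'a set set \<Rightarrow> 'a \<Rightarrow> nat" where
  "degree E v = card {e\<in>E. v \<in> e}"

definition max_degree :: "'a set set \<Rightarrow> nat" where
  "max_degree E = Max (insert 0 (degree E ` verts E))"

definition bipartite :: "'a set set \<Rightarrow> bool" where
  "bipartite E \<longleftrightarrow> (\<exists>A. \<forall>e\<in>E. card (e \<inter> A) = 1)"

definition mono_copy :: "'a set set \<Rightarrow> ('a set \<Rightarrow> nat) \<Rightarrow> 'b set set \<Rightarrow> bool" where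
  "mono_copy H f G \<longleftrightarrow> (\<exists>c \<phi>. inj_on \<phi> (verts G) \<and>
      (\<forall>e\<in>G. \<phi> ` e \<in> H \<and> f (\<phi> ` e) = c))"

definition arrows :: "'a set set \<Rightarrow> nat \<Rightarrow> 'b set set \<Rightarrow> bool" where
  "arrows H s G \<longleftrightarrow> (\<forall>f. (\<forall>e\<in>H. f e < s) \<longrightarrow> mono_copy H f G)"

text \<open>Host graphs H range over all finite graphs; every finite graph is isomorphic to one
on natural-number vertices.\<close>
definition degree_ramsey :: "'b set set \<Rightarrow> nat \<Rightarrow> nat" where
  "degree_ramsey G s = (LEAST d. \<exists>H :: nat set set. graph H \<and> arrows H s G \<and> max_degree H = d)"

definition degree_bip_ramsey :: "'b set set \<Rightarrow> nat \<Rightarrow> nat" where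
  "degree_bip_ramsey G s =
     (LEAST d. \<exists>H :: nat set set. graph H \<and> bipartite H \<and> arrows H s G \<and> max_degree H = d)"

definition K_bip :: "nat \<Rightarrow> nat \<Rightarrow> nat set set" where
  "K_bip m n = {{i, m + j} | i j. i < m \<and> j < n}"

end

theory Submission
  imports Defs "HOL-Library.FuncSet"
begin

lemma Kbip_eq: "K_bip a b = (\<lambda>(i,j). {i, a+j}) ` ({..<a} \<times> {..<b})"
  unfolding K_bip_def by auto

lemma Kbip_finite: "finite (K_bip a b)"
  unfolding Kbip_eq by auto

lemma Kbip_graph: "graph (K_bip a b)"
  unfolding graph_def K_bip_def using Kbip_finite[of a b] by (auto simp: K_bip_def)

lemma Kbip_bip: "bipartite (K_bip a b)"
  unfolding bipartite_def
proof (intro exI[of _ "{..<a}"] ballI)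
  fix e assume "e \<in> K_bip a b"
  then obtain i j where "e = {i, a+j}" "i < a" by (auto simp: K_bip_def)
  then have "e \<inter> {..<a} = {i}" by auto
  then show "card (e \<inter> {..<a}) = 1" by simp
qed

lemma Kbip_deg: "degree (K_bip a b) v \<le> a + b"
proof -
  have "{e \<in> K_bip a b. v \<in> e} \<subseteq> (\<lambda>i. {i,v}) ` {..<a} \<union> (\<lambda>j. {v,a+j}) ` {..<b}"
    by (auto simp: K_bip_def)
  then have "degree (K_bip a b) v \<le> card ((\<lambda>i. {i,v}) ` {..<a} \<union> (\<lambda>j. {v,a+j}) ` {..<b})"
    unfolding degree_def by (intro card_mono) auto
  also have "\<dots> \<le> card ((\<lambda>i. {i,v}) ` {..<a}) + card ((\<lambda>j. {v,a+j}) ` {..<b})"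
    by (rule card_Un_le)
  also have "\<dots> \<le> a + b"
    using card_image_le[of "{..<a}" "\<lambda>i. {i,v}"] card_image_le[of "{..<b}" "\<lambda>j. {v,a+j}"]
    by simp
  finally show ?thesis .
qed

lemma graph_verts_finite: "graph H \<Longrightarrow> finite (verts H)"
  unfolding graph_def verts_def
  by (metis card.infinite finite_Union zero_neq_numeral)

lemma Kbip_maxdeg: "max_degree (K_bip a b) \<le> a + b"
proof -
  have "finite (verts (K_bip a b))" using graph_verts_finite Kbip_graph by blast
  then show ?thesis unfolding max_degree_def
    by (intro Max.boundedI) (auto intro: Kbip_deg)
qed

lemma maxdeg_ge: "graph H \<Longrightarrow> v \<in> verts H \<Longrightarrow> degree H v \<le> max_degree H"
  unfolding max_degree_def using graph_verts_finite
  by (intro Max_ge) auto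

lemma pigeon:
  assumes "finite T" "\<forall>x\<in>X. g x \<in> T" "\<forall>t\<in>T. card {x\<in>X. g x = t} \<le> k"
  shows "card X \<le> card T * k"
proof -
  have "X = (\<Union>t\<in>T. {x\<in>X. g x = t})" using assms(2) by auto
  then have "card X \<le> (\<Sum>t\<in>T. card {x\<in>X. g x = t})"
    using card_UN_le[OF assms(1), of "\<lambda>t. {x\<in>X. g x = t}"] by simp
  also have "\<dots> \<le> card T * k" using sum_bounded_above[of T _ k] assms(3) by simp
  finally show ?thesis .
qed

lemma lower:
  assumes "m > 0" "n > 0" "s > 0" "graph H" "arrows H s (K_bip m n)"
  shows "n \<le> max_degree H"
proof -
  have "mono_copy H (\<lambda>_. 0::nat) (K_bip m n)"
    using assms(3,5) unfolding arrows_def by simp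
  then obtain c \<phi> where inj: "inj_on \<phi> (verts (K_bip m n))"
    and ed: "\<forall>e\<in>K_bip m n. \<phi> ` e \<in> H"
    unfolding mono_copy_def by blast
  have vs: "x \<in> verts (K_bip m n)" if "x < m + n" for x
  proof (cases "x < m")
    case True
    then have "{x, m+0} \<in> K_bip m n" using assms(2) unfolding K_bip_def by blast
    then show ?thesis unfolding verts_def by blast
  next
    case False
    then have "{0, m+(x-m)} \<in> K_bip m n" using assms(1) that unfolding K_bip_def by (intro CollectI exI[of _ 0] exI[of _ "x-m"]) auto
    then show ?thesis unfolding verts_def using False by auto
  qed
  let ?F = "(\<lambda>j. {\<phi> 0, \<phi> (m+j)}) ` {..<n}"
  have sub: "?F \<subseteq> {e\<in>H. \<phi> 0 \<in> e}"
  proof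
    fix e assume "e \<in> ?F"
    then obtain j where j: "j < n" "e = {\<phi> 0, \<phi> (m+j)}" by auto
    have "{0, m+j} \<in> K_bip m n" using j assms(1) unfolding K_bip_def by blast
    then show "e \<in> {e\<in>H. \<phi> 0 \<in> e}" using ed j by auto
  qed
  have "inj_on (\<lambda>j. {\<phi> 0, \<phi> (m+j)}) {..<n}"
  proof (rule inj_onI)
    fix x y assume xy: "x \<in> {..<n}" "y \<in> {..<n}" "{\<phi> 0, \<phi> (m+x)} = {\<phi> 0, \<phi> (m+y)}"
    have ne: "\<phi> 0 \<noteq> \<phi> (m+x)" "\<phi> 0 \<noteq> \<phi> (m+y)"
      using inj_onD[OF inj, of 0 "m+x"] inj_onD[OF inj, of 0 "m+y"] vs assms(1) xy by auto
    then have "\<phi> (m+x) = \<phi> (m+y)" using xy(3) by (auto simp: doubleton_eq_iff)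
    then show "x = y" using inj_onD[OF inj, of "m+x" "m+y"] vs xy by auto
  qed
  then have "n = card ?F" by (simp add: card_image)
  also have "\<dots> \<le> degree H (\<phi> 0)" unfolding degree_def
    using sub assms(4) by (intro card_mono) (auto simp: graph_def)
  also have "\<dots> \<le> max_degree H"
  proof (rule maxdeg_ge[OF assms(4)])
    have "{\<phi> 0, \<phi> (m+0)} \<in> ?F" using assms(2) by (intro image_eqI[where x=0]) auto
    then show "\<phi> 0 \<in> verts H" using sub unfolding verts_def by blast
  qed
  finally show ?thesis .
qed

lemma upper_arrows:
  assumes "m > 0" "n > 0" "s > 0"
  shows "arrows (K_bip (s*m) (n * s^(s*m))) s (K_bip m n)"
  unfolding arrows_def
proof (intro allI impI)
  fix f :: "nat set \<Rightarrow> nat"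
  assume fc: "\<forall>e\<in>K_bip (s*m) (n * s^(s*m)). f e < s"
  define a where "a = s*m"
  define b where "b = n * s^a"
  have fc': "f {i, a+j} < s" if "i < a" "j < b" for i j
    using fc that unfolding a_def b_def K_bip_def by blast
  define T where "T = PiE {..<a} (\<lambda>_. {..<s})"
  define g where "g j = restrict (\<lambda>i. f {i, a+j}) {..<a}" for j
  have gT: "\<forall>j\<in>{..<b}. g j \<in> T" unfolding T_def g_def using fc' by auto
  have cardT: "card T = s^a" unfolding T_def by (simp add: card_PiE)
  have fT: "finite T" unfolding T_def by (simp add: finite_PiE)
  have "\<exists>h\<in>T. \<not> card {j\<in>{..<b}. g j = h} \<le> n - 1"
  proof (rule ccontr)
    assume "\<not> ?thesis"
    then have "card {..<b} \<le> card T * (n-1)" using pigeon[OF fT gT] by blast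
    then have "n * s^a \<le> s^a * (n-1)" using cardT b_def by simp
    moreover have "s^a > 0" using assms by simp
    ultimately show False using assms(2)
      by (metis diff_less less_numeral_extra(1) mult.commute nat_mult_less_cancel_disj not_less)
  qed
  then obtain h where hT: "h \<in> T" and hJ: "n \<le> card {j\<in>{..<b}. g j = h}" by force
  have hs: "\<forall>i\<in>{..<a}. h i \<in> {..<s}" using hT unfolding T_def by auto
  have "\<exists>c\<in>{..<s}. \<not> card {i\<in>{..<a}. h i = c} \<le> m - 1"
  proof (rule ccontr)
    assume "\<not> ?thesis"
    then have "card {..<a} \<le> card {..<s} * (m-1)" using pigeon[OF _ hs] by blast
    then have "s*m \<le> s * (m-1)" using a_def by simp
    then show False using assms by simp
  qed
  then obtain c where "\<not> card {i\<in>{..<a}. h i = c} \<le> m - 1" by blast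
  then have hI: "m \<le> card {i\<in>{..<a}. h i = c}" using assms(1) by linarith
  obtain I where I: "I \<subseteq> {i\<in>{..<a}. h i = c}" "card I = m" and fI: "finite I"
    by (rule obtain_subset_with_card_n[OF hI])
  obtain J where J: "J \<subseteq> {j\<in>{..<b}. g j = h}" "card J = n" and fJ: "finite J"
    by (rule obtain_subset_with_card_n[OF hJ])
  obtain \<alpha> where \<alpha>: "bij_betw \<alpha> {0..<card I} I" using ex_bij_betw_nat_finite[OF fI] by blast
  obtain \<beta> where \<beta>: "bij_betw \<beta> {0..<card J} J" using ex_bij_betw_nat_finite[OF fJ] by blast
  note \<alpha> = \<alpha>[unfolded I(2)] and \<beta> = \<beta>[unfolded J(2)]
  define \<phi> where "\<phi> x = (if x < m then \<alpha> x else a + \<beta> (x - m))" for x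
  have \<alpha>I: "\<alpha> x \<in> I" if "x < m" for x using \<alpha> that by (auto simp: bij_betw_def)
  have \<beta>J: "\<beta> x \<in> J" if "x < n" for x using \<beta> that by (auto simp: bij_betw_def)
  have \<alpha>a: "\<alpha> x < a" if "x < m" for x using \<alpha>I[OF that] I(1) by auto
  have \<beta>b: "\<beta> x < b" if "x < n" for x using \<beta>J[OF that] J(1) by auto
  have vsub: "verts (K_bip m n) \<subseteq> {..<m+n}" unfolding verts_def K_bip_def by auto
  have "inj_on \<phi> {..<m+n}"
  proof (rule inj_onI)
    fix x y assume xy: "x \<in> {..<m+n}" "y \<in> {..<m+n}" "\<phi> x = \<phi> y"
    show "x = y"
    proof (cases "x < m"; cases "y < m")
      assume "x < m" "y < m"
      then show ?thesis using xy \<alpha> unfolding \<phi>_def bij_betw_def inj_on_def by auto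
    next
      assume "x < m" "\<not> y < m"
      then show ?thesis using xy \<alpha>a[of x] unfolding \<phi>_def by auto
    next
      assume "\<not> x < m" "y < m"
      then show ?thesis using xy \<alpha>a[of y] unfolding \<phi>_def by auto
    next
      assume "\<not> x < m" "\<not> y < m"
      then have "\<beta> (x-m) = \<beta> (y-m)" using xy unfolding \<phi>_def by auto
      then have "x - m = y - m" using \<beta> xy \<open>\<not> x < m\<close> \<open>\<not> y < m\<close>
        unfolding bij_betw_def inj_on_def by auto
      then show ?thesis using \<open>\<not> x < m\<close> \<open>\<not> y < m\<close> by simp
    qed
  qed
  then have inj: "inj_on \<phi> (verts (K_bip m n))" using vsub inj_on_subset by blast
  have "\<forall>e\<in>K_bip m n. \<phi> ` e \<in> K_bip (s*m) (n * s^(s*m)) \<and> f (\<phi> ` e) = c"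
  proof
    fix e assume "e \<in> K_bip m n"
    then obtain i j where e: "e = {i, m+j}" "i < m" "j < n" unfolding K_bip_def by blast
    have pe: "\<phi> ` e = {\<alpha> i, a + \<beta> j}" using e unfolding \<phi>_def by auto
    have "\<phi> ` e \<in> K_bip a b" unfolding pe K_bip_def using \<alpha>a[OF e(2)] \<beta>b[OF e(3)] by blast
    moreover have "f (\<phi> ` e) = c"
    proof -
      have "g (\<beta> j) = h" using \<beta>J[OF e(3)] J(1) by auto
      then have "f {\<alpha> i, a + \<beta> j} = h (\<alpha> i)" using \<alpha>a[OF e(2)] unfolding g_def by auto
      also have "\<dots> = c" using \<alpha>I[OF e(2)] I(1) by auto
      finally show ?thesis using pe by simp
    qed
    ultimately show "\<phi> ` e \<in> K_bip (s*m) (n * s^(s*m)) \<and> f (\<phi> ` e) = c"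
      unfolding a_def b_def by simp
  qed
  then show "mono_copy (K_bip (s*m) (n * s^(s*m))) f (K_bip m n)"
    unfolding mono_copy_def using inj by blast
qed

theorem theorem3:
  fixes m s :: nat
  assumes "m > 0" and "s > 0"
  shows "\<exists>c C :: real. c > 0 \<and> C > 0 \<and> (\<exists>N. \<forall>n\<ge>N.
           c * real n \<le> real (degree_ramsey (K_bip m n) s) \<and>
           degree_ramsey (K_bip m n) s \<le> degree_bip_ramsey (K_bip m n) s \<and>
           real (degree_bip_ramsey (K_bip m n) s) \<le> C * real n)"
proof (rule exI[of _ "1::real"], rule exI[of _ "real (s*m + s^(s*m))"], intro conjI exI[of _ "1::nat"] allI impI)
  show "(0::real) < 1" by simp
  have "0 < s * m + s ^ (s * m)" using assms by simp
  then show "0 < real (s * m + s ^ (s * m))" by (simp only: of_nat_0_less_iff)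
  fix n :: nat assume n1: "1 \<le> n"
  then have n0: "n > 0" by simp
  define H0 where "H0 = K_bip (s*m) (n * s^(s*m))"
  define P where "P d = (\<exists>H :: nat set set. graph H \<and> bipartite H \<and> arrows H s (K_bip m n) \<and> max_degree H = d)" for d
  define Q where "Q d = (\<exists>H :: nat set set. graph H \<and> arrows H s (K_bip m n) \<and> max_degree H = d)" for d
  have br: "degree_bip_ramsey (K_bip m n) s = Least P" unfolding degree_bip_ramsey_def P_def by simp
  have r: "degree_ramsey (K_bip m n) s = Least Q" unfolding degree_ramsey_def Q_def by simp
  have P0: "P (max_degree H0)" unfolding P_def H0_def
    using Kbip_graph Kbip_bip upper_arrows[OF assms(1) n0 assms(2)] by blast
  have "Least P \<le> max_degree H0" using Least_le P0 by metis
  also have "\<dots> \<le> s*m + n * s^(s*m)" unfolding H0_def by (rule Kbip_maxdeg)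
  also have "\<dots> \<le> (s*m + s^(s*m)) * n" using n1 by (simp add: algebra_simps)
  finally have ub: "Least P \<le> (s*m + s^(s*m)) * n" .
  have "P (Least P)" using LeastI P0 by metis
  then have QP: "Q (Least P)" unfolding P_def Q_def by blast
  have mid: "Least Q \<le> Least P" using Least_le QP by metis
  have QL: "Q (Least Q)" using LeastI QP by metis
  have Qd: "\<forall>d. Q d \<longrightarrow> (\<exists>H :: nat set set. graph H \<and> arrows H s (K_bip m n) \<and> max_degree H = d)"
    unfolding Q_def by blast
  obtain H :: "nat set set" where "graph H" "arrows H s (K_bip m n)" "max_degree H = Least Q"
    using Qd QL by blast
  then have lb: "n \<le> Least Q" using lower[OF assms(1) n0 assms(2)] by metis
  show "1 * real n \<le> real (degree_ramsey (K_bip m n) s)" using lb r by simp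
  show "degree_ramsey (K_bip m n) s \<le> degree_bip_ramsey (K_bip m n) s" using mid r br by simp
  show "real (degree_bip_ramsey (K_bip m n) s) \<le> real (s * m + s ^ (s * m)) * real n"
    using ub br by (metis of_nat_le_iff of_nat_mult)
qed

end
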